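(* Let $n,\kappa\ge1$. For every $t>0$, the covering number of $\mathcal{S}_{1,2}\subset\mathbb{R}^{n^\kappa}$ satisfies $$\mathcal{N}(\mathcal{S}_{1,2},t)\le\Big(\Big(\frac{6\kappa}{t}\Big)^{\kappa n}+1\Big)^2.$$
   Context: $\mathcal{S}_1=\{\mathbf{u}^1\otimes\cdots\otimes\mathbf{u}^\kappa:\mathbf{u}^i\in\mathbb{S}^{n-1}\}\subset\mathbb{R}^{n^\kappa}$ ($\otimes$ the Kronecker product), $\mathcal{S}_2=\{(\mathbf{x}+\mathbf{y})/\|\mathbf{x}+\mathbf{y}\|_2:\mathbf{x},\mathbf{y}\in\mathcal{S}_1,\langle\mathbf{x},\mathbf{y}\rangle=0\}$, $\mathcal{S}_{1,2}=\mathcal{S}_1\cup\mathcal{S}_2$. The covering number $\mathcal{N}(\mathcal{S},t)$ is the minimal cardinality of a subset of $\mathcal{S}$ such that every element of $\mathcal{S}$ is within Euclidean distance $t$ of an element of the subset. *)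

theory Defs
  imports "HOL-Analysis.Analysis" "HOL-Library.Extended_Nat"
begin

text \<open>Vectors of R^N are represented as functions nat \<Rightarrow> real vanishing outside {..<N}.\<close>

definition vinner :: "nat \<Rightarrow> (nat \<Rightarrow> real) \<Rightarrow> (nat \<Rightarrow> real) \<Rightarrow> real" where
  "vinner N x y = (\<Sum>i<N. x i * y i)"

definition vnorm :: "nat \<Rightarrow> (nat \<Rightarrow> real) \<Rightarrow> real" where
  "vnorm N x = sqrt (\<Sum>i<N. (x i)^2)"

definition vdist :: "nat \<Rightarrow> (nat \<Rightarrow> real) \<Rightarrow> (nat \<Rightarrow> real) \<Rightarrow> real" where
  "vdist N x y = sqrt (\<Sum>i<N. (x i - y i)^2)"

definition usphere :: "nat \<Rightarrow> (nat \<Rightarrow> real) set" where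
  "usphere n = {u. (\<forall>i\<ge>n. u i = 0) \<and> vnorm n u = 1}"

text \<open>Kronecker product u^1 \<otimes> ... \<otimes> u^\<kappa> of \<kappa> vectors in R^n (factors indexed 0..\<kappa>-1,
  the first factor being the most significant), as a vector in R^(n^\<kappa>).\<close>
definition kron :: "nat \<Rightarrow> nat \<Rightarrow> (nat \<Rightarrow> nat \<Rightarrow> real) \<Rightarrow> (nat \<Rightarrow> real)" where
  "kron n \<kappa> us = (\<lambda>j. if j < n ^ \<kappa>
      then (\<Prod>i<\<kappa>. us i ((j div n ^ (\<kappa> - 1 - i)) mod n)) else 0)"

definition S1 :: "nat \<Rightarrow> nat \<Rightarrow> (nat \<Rightarrow> real) set" where
  "S1 n \<kappa> = {kron n \<kappa> us | us. \<forall>i<\<kappa>. us i \<in> usphere n}"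

definition S2 :: "nat \<Rightarrow> nat \<Rightarrow> (nat \<Rightarrow> real) set" where
  "S2 n \<kappa> = {(\<lambda>j. (x j + y j) / vnorm (n ^ \<kappa>) (\<lambda>j. x j + y j)) | x y.
      x \<in> S1 n \<kappa> \<and> y \<in> S1 n \<kappa> \<and> vinner (n ^ \<kappa>) x y = 0}"

definition S12 :: "nat \<Rightarrow> nat \<Rightarrow> (nat \<Rightarrow> real) set" where
  "S12 n \<kappa> = S1 n \<kappa> \<union> S2 n \<kappa>"

definition covering_number :: "nat \<Rightarrow> (nat \<Rightarrow> real) set \<Rightarrow> real \<Rightarrow> enat" where
  "covering_number N S t =
     (INF T \<in> {T. finite T \<and> T \<subseteq> S \<and> (\<forall>x\<in>S. \<exists>y\<in>T. vdist N x y \<le> t)}. enat (card T))"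

end

theory Submission
  imports Defs
begin


lemma psf_lborel: "product_sigma_finite (\<lambda>_::'i. lborel :: real measure)"
  by (simp add: product_sigma_finite_def sigma_finite_lborel)

lemma lborel_affine_pre:
  fixes r a :: real assumes "r > 0" and "A \<in> sets lborel"
  shows "ennreal r * emeasure lborel ((\<lambda>y. a + r * y) -` A) = emeasure lborel A"
proof -
  have "emeasure lborel A = emeasure (density (distr lborel borel (\<lambda>x. a + r * x)) (\<lambda>_. ennreal r)) A"
    using lborel_real_affine[of r a] assms by simp
  also have "\<dots> = ennreal r * emeasure (distr lborel borel (\<lambda>x. a + r * x)) A"
    using assms by (subst emeasure_density_const) auto
  also have "\<dots> = ennreal r * emeasure lborel ((\<lambda>y. a + r * y) -` A)"
    using assms by (subst emeasure_distr) auto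
  finally show ?thesis by simp
qed

lemma pre_borel:
  assumes "A \<in> sets (borel :: real measure)"
  shows "(\<lambda>y::real. a + r*y) -` A \<in> sets borel"
proof -
  have "(\<lambda>y::real. a + r*y) \<in> borel_measurable borel" by measurable
  from measurable_sets[OF this assms] show ?thesis by simp
qed

lemma PiM_affine:
  fixes I :: "'i set" and r :: real and a :: "'i \<Rightarrow> real"
  assumes I: "finite I" and r: "r > 0" and X: "X \<in> sets (PiM I (\<lambda>_. lborel))"
  shows "emeasure (PiM I (\<lambda>_. lborel)) X = ennreal (r ^ card I) *
     emeasure (PiM I (\<lambda>_. lborel)) ((\<lambda>x. \<lambda>i\<in>I. a i + r * x i) -` X \<inter> space (PiM I (\<lambda>_. lborel)))"
proof -
  interpret product_sigma_finite "\<lambda>_::'i. lborel :: real measure" by (rule psf_lborel)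
  define M where "M = PiM I (\<lambda>_::'i. lborel :: real measure)"
  define f where "f = (\<lambda>x. \<lambda>i\<in>I. a i + r * (x i :: real))"
  have fm: "f \<in> measurable M M" unfolding f_def M_def by measurable
  have eq: "scale_measure (ennreal (r ^ card I)) (distr M M f) = M"
    unfolding M_def
  proof (rule PiM_eqI[OF I])
    show "sets (scale_measure (ennreal (r ^ card I)) (distr (PiM I (\<lambda>_. lborel)) (PiM I (\<lambda>_. lborel)) f)) = sets (PiM I (\<lambda>_. lborel))"
      by simp
    fix A assume A: "\<And>i. i \<in> I \<Longrightarrow> A i \<in> sets (lborel :: real measure)"
    have pre: "f -` Pi\<^sub>E I A \<inter> space M = Pi\<^sub>E I (\<lambda>i. (\<lambda>y. a i + r * y) -` A i)"
      unfolding f_def M_def space_PiM by (auto simp: PiE_def Pi_def extensional_def)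
    have box: "Pi\<^sub>E I A \<in> sets M" unfolding M_def using A I by (intro sets_PiM_I_finite) auto
    have "emeasure (scale_measure (ennreal (r ^ card I)) (distr M M f)) (Pi\<^sub>E I A)
        = ennreal (r ^ card I) * emeasure M (f -` Pi\<^sub>E I A \<inter> space M)"
      using box fm by (simp add: emeasure_distr)
    also have "\<dots> = ennreal (r ^ card I) * (\<Prod>i\<in>I. emeasure lborel ((\<lambda>y. a i + r * y) -` A i))"
      unfolding pre unfolding M_def using A I by (subst emeasure_PiM) (auto intro: pre_borel)
    also have "\<dots> = (\<Prod>i\<in>I. ennreal r * emeasure lborel ((\<lambda>y. a i + r * y) -` A i))"
      using r by (simp add: prod.distrib ennreal_power)
    also have "\<dots> = (\<Prod>i\<in>I. emeasure lborel (A i))"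
      using A r by (intro prod.cong refl lborel_affine_pre) auto
    finally show "emeasure (scale_measure (ennreal (r ^ card I)) (distr (PiM I (\<lambda>_. lborel)) (PiM I (\<lambda>_. lborel)) f)) (Pi\<^sub>E I A) = (\<Prod>i\<in>I. emeasure lborel (A i))"
      unfolding M_def .
  qed
  have "emeasure M X = emeasure (scale_measure (ennreal (r ^ card I)) (distr M M f)) X"
    by (simp add: eq)
  also have "\<dots> = ennreal (r ^ card I) * emeasure M (f -` X \<inter> space M)"
    using X fm unfolding M_def by (simp add: emeasure_distr)
  finally show ?thesis unfolding M_def f_def .
qed



definition Ib :: "nat \<Rightarrow> nat \<Rightarrow> (nat\<times>nat) set" where "Ib B n = {..<B} \<times> {..<n}"

abbreviation MB :: "nat \<Rightarrow> nat \<Rightarrow> (nat\<times>nat \<Rightarrow> real) measure" where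
  "MB B n \<equiv> PiM (Ib B n) (\<lambda>_. lborel)"

definition bl :: "nat \<Rightarrow> nat \<Rightarrow> real \<Rightarrow> (nat\<times>nat \<Rightarrow> real) \<Rightarrow> (nat\<times>nat \<Rightarrow> real) set" where
  "bl B n r a = {x \<in> space (MB B n). \<forall>i\<in>{..<B}. L2_set (\<lambda>j. x (i,j) - a (i,j)) {..<n} < r}"

lemma finite_Ib[simp]: "finite (Ib B n)" by (simp add: Ib_def)
lemma card_Ib[simp]: "card (Ib B n) = B * n" by (simp add: Ib_def card_cartesian_product)

lemma comp_meas: "i < B \<Longrightarrow> j < n \<Longrightarrow> (\<lambda>x. x (i,j)) \<in> borel_measurable (MB B n)"
  using measurable_component_singleton[of "(i,j)" "Ib B n" "\<lambda>_. lborel :: real measure"]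
  by (simp add: Ib_def)

lemma bl_fun_meas: "i < B \<Longrightarrow> (\<lambda>x. L2_set (\<lambda>j. x (i,j) - a (i,j)) {..<n}) \<in> borel_measurable (MB B n)"
  unfolding L2_set_def
  by (intro measurable_compose[OF _ borel_measurable_sqrt] borel_measurable_sum borel_measurable_power borel_measurable_diff
      comp_meas borel_measurable_const) auto

lemma bl_sets: "bl B n r a \<in> sets (MB B n)"
  unfolding bl_def
  by (intro sets.sets_Collect_finite_All borel_measurable_less bl_fun_meas borel_measurable_const) auto

lemma L2_tri: "L2_set (\<lambda>j. f j - h j) A \<le> L2_set (\<lambda>j. f j - g j) A + L2_set (\<lambda>j. g j - h j) A"
  using L2_set_triangle_ineq[of "\<lambda>j. f j - g j" "\<lambda>j. g j - h j" A] by simp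

lemma L2_sym: "L2_set (\<lambda>j. f j - g j) A = L2_set (\<lambda>j. g j - f j) A"
  unfolding L2_set_def by (simp add: power2_commute)

lemma L2_abs_le: "finite A \<Longrightarrow> i \<in> A \<Longrightarrow> \<bar>f i\<bar> \<le> L2_set f A"
proof -
  assume "finite A" "i \<in> A"
  then have "f i \<le> L2_set f A" "- f i \<le> L2_set (\<lambda>j. - f j) A" by (auto intro: member_le_L2_set)
  moreover have "L2_set (\<lambda>j. - f j) A = L2_set f A" unfolding L2_set_def by simp
  ultimately show ?thesis by simp
qed

lemma bl_scale:
  assumes r: "r > 0"
  shows "emeasure (MB B n) (bl B n r a) = ennreal (r^(B*n)) * emeasure (MB B n) (bl B n 1 (\<lambda>_. 0))"
proof -
  have key: "L2_set (\<lambda>j. (if (i,j) \<in> Ib B n then a (i,j) + r * x (i,j) else undefined) - a (i,j)) {..<n} = r * L2_set (\<lambda>j. x (i,j)) {..<n}"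
    if "i < B" for x i
  proof -
    have "L2_set (\<lambda>j. (if (i,j) \<in> Ib B n then a (i,j) + r * x (i,j) else undefined) - a (i,j)) {..<n} = L2_set (\<lambda>j. r * (x (i,j))) {..<n}"
      using that by (intro L2_set_cong) (auto simp: Ib_def)
    also have "\<dots> = r * L2_set (\<lambda>j. x (i,j)) {..<n}"
      using r by (simp add: L2_set_right_distrib)
    finally show ?thesis .
  qed
  have pre: "(\<lambda>x. \<lambda>p\<in>Ib B n. a p + r * x p) -` bl B n r a \<inter> space (MB B n) = bl B n 1 (\<lambda>_. 0)"
    using r unfolding bl_def by (auto simp: key space_PiM)
  show ?thesis
    using PiM_affine[OF finite_Ib r bl_sets, of B n r a a] unfolding pre by simp
qed

lemma V_pos:
  assumes n1: "n \<ge> 1"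
  shows "0 < emeasure (MB B n) (bl B n 1 (\<lambda>_. 0))"
proof -
  define d where "d = 1 / real n"
  have d: "d > 0" using n1 by (simp add: d_def)
  have sub: "Pi\<^sub>E (Ib B n) (\<lambda>_. {-d<..<d}) \<subseteq> bl B n 1 (\<lambda>_. 0)"
  proof
    fix x assume x: "x \<in> Pi\<^sub>E (Ib B n) (\<lambda>_. {-d<..<d})"
    have "L2_set (\<lambda>j. x (i,j) - 0) {..<n} < 1" if "i < B" for i
    proof -
      have xl: "\<bar>x (i,j) - 0\<bar> < d" if "j < n" for j
        using x \<open>i < B\<close> that by (force simp: Ib_def PiE_def Pi_def abs_less_iff)
      have "L2_set (\<lambda>j. x (i,j) - 0) {..<n} \<le> (\<Sum>j<n. \<bar>x (i,j) - 0\<bar>)" by (rule L2_set_le_sum_abs)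
      also have "\<dots> < (\<Sum>j<n. d)"
        using n1 xl by (intro sum_strict_mono) (auto simp: lessThan_empty_iff)
      also have "\<dots> = 1" using n1 by (simp add: d_def)
      finally show ?thesis .
    qed
    then show "x \<in> bl B n 1 (\<lambda>_. 0)" using x unfolding bl_def by (auto simp: space_PiM PiE_def Pi_def)
  qed
  interpret product_sigma_finite "\<lambda>_::nat\<times>nat. lborel :: real measure" by (rule psf_lborel)
  have "emeasure (MB B n) (Pi\<^sub>E (Ib B n) (\<lambda>_. {-d<..<d})) = (\<Prod>p\<in>Ib B n. ennreal (2*d))"
    using d by (subst emeasure_PiM) auto
  also have "\<dots> > 0" using d by (simp add: ennreal_power)
  finally have "0 < emeasure (MB B n) (Pi\<^sub>E (Ib B n) (\<lambda>_. {-d<..<d}))" .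
  also have "\<dots> \<le> emeasure (MB B n) (bl B n 1 (\<lambda>_. 0))"
    by (intro emeasure_mono sub bl_sets)
  finally show ?thesis .
qed

lemma V_fin: "emeasure (MB B n) (bl B n 1 (\<lambda>_. 0)) < \<infinity>"
proof -
  have sub: "bl B n 1 (\<lambda>_. 0) \<subseteq> Pi\<^sub>E (Ib B n) (\<lambda>_. {-1..1})"
  proof
    fix x assume x: "x \<in> bl B n 1 (\<lambda>_. 0)"
    have "\<bar>x (i,j)\<bar> \<le> 1" if "i < B" "j < n" for i j
    proof -
      have "\<bar>x (i,j) - 0\<bar> \<le> L2_set (\<lambda>j. x (i,j) - 0) {..<n}" using that by (intro L2_abs_le) auto
      also have "\<dots> < 1" using x that unfolding bl_def by auto
      finally show ?thesis by simp
    qed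
    then show "x \<in> Pi\<^sub>E (Ib B n) (\<lambda>_. {-1..1})" using x unfolding bl_def
      by (auto simp: space_PiM PiE_def Pi_def Ib_def abs_le_iff)
  qed
  interpret product_sigma_finite "\<lambda>_::nat\<times>nat. lborel :: real measure" by (rule psf_lborel)
  have "emeasure (MB B n) (bl B n 1 (\<lambda>_. 0)) \<le> emeasure (MB B n) (Pi\<^sub>E (Ib B n) (\<lambda>_. {-1..1}))"
    by (intro emeasure_mono sub) auto
  also have "\<dots> = (\<Prod>p\<in>Ib B n. ennreal 2)" by (subst emeasure_PiM) auto
  also have "\<dots> < \<infinity>" by (simp add: power_eq_top_ennreal less_top[symmetric])
  finally show ?thesis .
qed

lemma packing:
  assumes n1: "n \<ge> 1" and e: "\<epsilon> > 0" and fin: "finite P"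
    and nrm: "\<forall>u\<in>P. \<forall>i<B. L2_set (u i) {..<n} \<le> 1"
    and sep: "\<forall>u\<in>P. \<forall>v\<in>P. u \<noteq> v \<longrightarrow> (\<exists>i<B. L2_set (\<lambda>j. u i j - v i j) {..<n} \<ge> \<epsilon>)"
  shows "real (card P) \<le> (1 + 2/\<epsilon>)^(B*n)"
proof -
  define F where "F u = bl B n (\<epsilon>/2) (\<lambda>(i,j). u i j)" for u :: "nat \<Rightarrow> nat \<Rightarrow> real"
  define V where "V = emeasure (MB B n) (bl B n 1 (\<lambda>_. 0))"
  have disj: "disjoint_family_on F P"
    unfolding disjoint_family_on_def
  proof (intro ballI impI)
    fix u v assume u: "u \<in> P" and v: "v \<in> P" and uv: "u \<noteq> v"
    show "F u \<inter> F v = {}"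
    proof (rule ccontr)
      assume "F u \<inter> F v \<noteq> {}"
      then obtain x where xu: "x \<in> F u" and xv: "x \<in> F v" by blast
      obtain i where i: "i < B" and ge: "L2_set (\<lambda>j. u i j - v i j) {..<n} \<ge> \<epsilon>"
        using sep u v uv by blast
      have "L2_set (\<lambda>j. u i j - v i j) {..<n} \<le> L2_set (\<lambda>j. u i j - x (i,j)) {..<n} + L2_set (\<lambda>j. x (i,j) - v i j) {..<n}"
        by (rule L2_tri)
      also have "\<dots> = L2_set (\<lambda>j. x (i,j) - u i j) {..<n} + L2_set (\<lambda>j. x (i,j) - v i j) {..<n}"
        by (simp add: L2_sym)
      also have "\<dots> < \<epsilon>/2 + \<epsilon>/2"
        using xu xv i unfolding F_def bl_def by (intro add_strict_mono) auto
      finally show False using ge by simp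
    qed
  qed
  have sub: "(\<Union>u\<in>P. F u) \<subseteq> bl B n (1 + \<epsilon>/2) (\<lambda>_. 0)"
  proof
    fix x assume "x \<in> (\<Union>u\<in>P. F u)"
    then obtain u where u: "u \<in> P" and xu: "x \<in> F u" by blast
    have "L2_set (\<lambda>j. x (i,j) - 0) {..<n} < 1 + \<epsilon>/2" if i: "i < B" for i
    proof -
      have "L2_set (\<lambda>j. x (i,j) - 0) {..<n} \<le> L2_set (\<lambda>j. x (i,j) - u i j) {..<n} + L2_set (\<lambda>j. u i j - 0) {..<n}"
        by (rule L2_tri)
      also have "\<dots> < \<epsilon>/2 + 1"
        using xu i nrm u unfolding F_def bl_def by (intro add_less_le_mono) auto
      finally show ?thesis by simp
    qed
    then show "x \<in> bl B n (1 + \<epsilon>/2) (\<lambda>_. 0)" using xu unfolding F_def bl_def by auto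
  qed
  have "(\<Sum>u\<in>P. emeasure (MB B n) (F u)) = emeasure (MB B n) (\<Union>u\<in>P. F u)"
    using disj fin by (intro sum_emeasure) (auto simp: bl_sets F_def[abs_def] simp del: F_def)
  also have "\<dots> \<le> emeasure (MB B n) (bl B n (1 + \<epsilon>/2) (\<lambda>_. 0))"
    by (intro emeasure_mono sub bl_sets)
  also have "\<dots> = ennreal ((1 + \<epsilon>/2)^(B*n)) * V"
    unfolding V_def using e by (intro bl_scale) auto
  finally have ineq: "(\<Sum>u\<in>P. emeasure (MB B n) (F u)) \<le> ennreal ((1 + \<epsilon>/2)^(B*n)) * V" .
  have "(\<Sum>u\<in>P. emeasure (MB B n) (F u)) = (\<Sum>u\<in>P. ennreal ((\<epsilon>/2)^(B*n)) * V)"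
    unfolding F_def V_def using e by (intro sum.cong refl bl_scale) auto
  also have "\<dots> = of_nat (card P) * (ennreal ((\<epsilon>/2)^(B*n)) * V)" by simp
  finally have ineq2: "of_nat (card P) * (ennreal ((\<epsilon>/2)^(B*n)) * V) \<le> ennreal ((1 + \<epsilon>/2)^(B*n)) * V"
    using ineq by simp
  have Vp: "0 < V" and Vf: "V < \<infinity>" unfolding V_def using V_pos[OF n1] V_fin by auto
  obtain v where v: "V = ennreal v" "v > 0"
    using Vp Vf by (cases V) (auto simp: ennreal_less_zero_iff)
  have "ennreal (real (card P) * (\<epsilon>/2)^(B*n) * v) \<le> ennreal ((1 + \<epsilon>/2)^(B*n) * v)"
    using ineq2 v e by (simp add: ennreal_mult' ennreal_of_nat_eq_real_of_nat mult.assoc)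
  then have "real (card P) * (\<epsilon>/2)^(B*n) * v \<le> (1 + \<epsilon>/2)^(B*n) * v"
    using v e by (subst (asm) ennreal_le_iff) auto
  then have "real (card P) * (\<epsilon>/2)^(B*n) \<le> (1 + \<epsilon>/2)^(B*n)"
    using v by simp
  then have "real (card P) \<le> (1 + \<epsilon>/2)^(B*n) / (\<epsilon>/2)^(B*n)"
    using e by (simp add: field_simps)
  also have "\<dots> = ((1 + \<epsilon>/2) / (\<epsilon>/2))^(B*n)" by (rule power_divide[symmetric])
  also have "(1 + \<epsilon>/2) / (\<epsilon>/2) = 1 + 2/\<epsilon>" using e by (simp add: field_simps)
  finally show ?thesis .
qed

lemma net_exists:
  assumes n1: "n \<ge> 1" and e: "\<epsilon> > 0" and nrm: "\<forall>u\<in>Z. \<forall>i<B. L2_set (u i) {..<n} \<le> 1"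
  shows "\<exists>P. finite P \<and> P \<subseteq> Z \<and> real (card P) \<le> (1 + 2/\<epsilon>)^(B*n) \<and>
           (\<forall>z\<in>Z. \<exists>p\<in>P. \<forall>i<B. L2_set (\<lambda>j. z i j - p i j) {..<n} < \<epsilon>)"
proof -
  define Sep where "Sep P \<longleftrightarrow> finite P \<and> P \<subseteq> Z \<and>
     (\<forall>u\<in>P. \<forall>v\<in>P. u \<noteq> v \<longrightarrow> (\<exists>i<B. L2_set (\<lambda>j. u i j - v i j) {..<n} \<ge> \<epsilon>))" for P
  obtain K :: nat where K: "(1 + 2/\<epsilon>)^(B*n) \<le> real K" using real_arch_simple by blast
  have bnd: "card P < Suc K" if "Sep P" for P
  proof -
    have "real (card P) \<le> (1 + 2/\<epsilon>)^(B*n)"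
      using that nrm unfolding Sep_def by (intro packing[OF n1 e]) auto
    then show ?thesis using K by linarith
  qed
  have "Sep {}" unfolding Sep_def by simp
  from ex_has_greatest_nat[of Sep "{}" card "Suc K", OF this] bnd
  obtain P where P: "Sep P" and maxP: "\<And>Q. Sep Q \<Longrightarrow> card Q \<le> card P" by blast
  have cov: "\<forall>z\<in>Z. \<exists>p\<in>P. \<forall>i<B. L2_set (\<lambda>j. z i j - p i j) {..<n} < \<epsilon>"
  proof (rule ccontr)
    assume "\<not> ?thesis"
    then obtain z where z: "z \<in> Z" and far: "\<forall>p\<in>P. \<exists>i<B. L2_set (\<lambda>j. z i j - p i j) {..<n} \<ge> \<epsilon>"
      by (auto simp: not_less)
    have "z \<notin> P"
    proof
      assume "z \<in> P"
      with far obtain i where "L2_set (\<lambda>j. z i j - z i j) {..<n} \<ge> \<epsilon>" by blast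
      then show False using e by (simp add: L2_set_def)
    qed
    have "Sep (insert z P)"
      using P z far unfolding Sep_def
      by (auto simp: L2_sym[of "\<lambda>j. _ j" "\<lambda>j. z _ j"])
    from maxP[OF this] P \<open>z \<notin> P\<close> show False unfolding Sep_def by simp
  qed
  have "real (card P) \<le> (1 + 2/\<epsilon>)^(B*n)"
    using P nrm unfolding Sep_def by (intro packing[OF n1 e]) auto
  moreover have "finite P" "P \<subseteq> Z" using P unfolding Sep_def by auto
  ultimately show ?thesis using cov by (intro exI[of _ P]) simp
qed



lemma digit_aux:
  fixes n j e k :: nat
  assumes "e < k" and "n \<ge> 1"
  shows "(j mod n^k) div n^e mod n = j div n^e mod n"
proof -
  have k: "n^k = n^e * n^(k-e)" using assms by (simp add: power_add[symmetric])
  have "(j mod n^k) div n^e = (j div n^e) mod n^(k-e)"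
    unfolding k using assms by (simp add: mod_mult2_eq div_add1_eq)
  moreover have "n dvd n^(k-e)" using assms by (simp add: dvd_power)
  ultimately show ?thesis by (simp add: mod_mod_cancel)
qed

lemma kron_Suc:
  assumes n1: "n \<ge> 1" and j: "j < n * n^k"
  shows "kron n (Suc k) us j = us 0 (j div n^k) * kron n k (\<lambda>i. us (Suc i)) (j mod n^k)"
proof -
  have pos: "n^k > 0" using n1 by simp
  have jm: "j mod n^k < n^k" using pos by simp
  have d0: "j div n^k < n" using j by (simp add: less_mult_imp_div_less mult.commute)
  have "kron n (Suc k) us j = (\<Prod>i<Suc k. us i ((j div n ^ (Suc k - 1 - i)) mod n))"
    using j by (simp add: kron_def mult.commute)
  also have "\<dots> = us 0 ((j div n^k) mod n) * (\<Prod>i<k. us (Suc i) ((j div n ^ (k - 1 - i)) mod n))"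
    by (simp only: prod.lessThan_Suc_shift) simp
  also have "(\<Prod>i<k. us (Suc i) ((j div n ^ (k - 1 - i)) mod n)) =
             (\<Prod>i<k. us (Suc i) (((j mod n^k) div n ^ (k - 1 - i)) mod n))"
    using n1 by (intro prod.cong refl) (simp add: digit_aux)
  also have "\<dots> = kron n k (\<lambda>i. us (Suc i)) (j mod n^k)"
    using jm by (simp add: kron_def)
  finally show ?thesis using d0 by simp
qed

lemma sum_divmod:
  fixes g :: "nat \<Rightarrow> nat \<Rightarrow> 'a::comm_monoid_add"
  assumes m: "m > 0"
  shows "(\<Sum>j<n*m. g (j div m) (j mod m)) = (\<Sum>a<n. \<Sum>b<m. g a b)"
proof -
  have "(\<Sum>a<n. \<Sum>b<m. g a b) = (\<Sum>p\<in>{..<n}\<times>{..<m}. g (fst p) (snd p))"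
    by (simp add: sum.cartesian_product split_def)
  also have "\<dots> = (\<Sum>j<n*m. g (j div m) (j mod m))"
  proof (rule sum.reindex_bij_witness[of _ "\<lambda>j. (j div m, j mod m)" "\<lambda>p. fst p * m + snd p"])
    fix p assume p: "p \<in> {..<n}\<times>{..<m}"
    show "(\<lambda>j. (j div m, j mod m)) (fst p * m + snd p) = p" using p by (cases p) auto
    have "fst p * m + snd p < (fst p + 1) * m" using p by (cases p) auto
    also have "\<dots> \<le> n * m" using p by (intro mult_right_mono) (cases p, auto)
    finally show "fst p * m + snd p \<in> {..<n*m}" by simp
    show "g ((fst p * m + snd p) div m) ((fst p * m + snd p) mod m) = g (fst p) (snd p)"
      using p by (cases p) auto
  next
    fix j assume j: "j \<in> {..<n*m}"
    show "fst (j div m, j mod m) * m + snd (j div m, j mod m) = j" by simp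
    show "(j div m, j mod m) \<in> {..<n}\<times>{..<m}" using j m by (auto simp: less_mult_imp_div_less)
  qed
  finally show ?thesis ..
qed

lemma L2_outer:
  fixes a X :: "nat \<Rightarrow> real"
  assumes m: "m > 0"
  shows "L2_set (\<lambda>j. a (j div m) * X (j mod m)) {..<n*m} = L2_set a {..<n} * L2_set X {..<m}"
proof -
  have "(\<Sum>j<n*m. (a (j div m) * X (j mod m))^2) = (\<Sum>p<n. \<Sum>q<m. (a p * X q)^2)"
    using sum_divmod[where g="\<lambda>p q. (a p * X q)^2" and n=n, OF m] by simp
  also have "\<dots> = (\<Sum>p<n. (a p)^2) * (\<Sum>q<m. (X q)^2)"
    by (simp add: sum_product power_mult_distrib)
  finally show ?thesis unfolding L2_set_def by (simp add: real_sqrt_mult)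
qed

lemma kron_L2:
  assumes n1: "n \<ge> 1"
  shows "L2_set (kron n k us) {..<n^k} = (\<Prod>i<k. L2_set (us i) {..<n})"
proof (induction k arbitrary: us)
  case 0
  then show ?case by (simp add: kron_def L2_set_def lessThan_Suc)
next
  case (Suc k)
  have pos: "n^k > 0" using n1 by simp
  have "L2_set (kron n (Suc k) us) {..<n^Suc k} =
        L2_set (\<lambda>j. us 0 (j div n^k) * kron n k (\<lambda>i. us (Suc i)) (j mod n^k)) {..<n*n^k}"
    using n1 by (intro L2_set_cong) (auto simp: kron_Suc)
  also have "\<dots> = L2_set (us 0) {..<n} * L2_set (kron n k (\<lambda>i. us (Suc i))) {..<n^k}"
    by (rule L2_outer[OF pos])
  also have "\<dots> = (\<Prod>i<Suc k. L2_set (us i) {..<n})"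
    using Suc.IH by (simp add: prod.lessThan_Suc_shift del: prod.lessThan_Suc)
  finally show ?case .
qed

lemma kron_lip:
  assumes n1: "n \<ge> 1"
    and nu: "\<forall>i<k. L2_set (us i) {..<n} \<le> 1" and nv: "\<forall>i<k. L2_set (vs i) {..<n} \<le> 1"
  shows "L2_set (\<lambda>j. kron n k us j - kron n k vs j) {..<n^k} \<le> (\<Sum>i<k. L2_set (\<lambda>l. us i l - vs i l) {..<n})"
  using nu nv
proof (induction k arbitrary: us vs)
  case 0
  then show ?case by (simp add: kron_def L2_set_def)
next
  case (Suc k)
  have pos: "n^k > 0" using n1 by simp
  define X where "X = kron n k (\<lambda>i. us (Suc i))"
  define Y where "Y = kron n k (\<lambda>i. vs (Suc i))"
  have X1: "L2_set X {..<n^k} \<le> 1"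
    unfolding X_def kron_L2[OF n1] using Suc.prems by (intro prod_le_1) auto
  have v1: "L2_set (vs 0) {..<n} \<le> 1" using Suc.prems by auto
  have "L2_set (\<lambda>j. kron n (Suc k) us j - kron n (Suc k) vs j) {..<n^Suc k} =
        L2_set (\<lambda>j. (\<lambda>j. (us 0 (j div n^k) - vs 0 (j div n^k)) * X (j mod n^k)) j +
                    (\<lambda>j. vs 0 (j div n^k) * (X (j mod n^k) - Y (j mod n^k))) j) {..<n*n^k}"
    using n1 by (intro L2_set_cong) (auto simp: kron_Suc X_def Y_def algebra_simps)
  also have "\<dots> \<le> L2_set (\<lambda>j. (us 0 (j div n^k) - vs 0 (j div n^k)) * X (j mod n^k)) {..<n*n^k} +
                  L2_set (\<lambda>j. vs 0 (j div n^k) * (X (j mod n^k) - Y (j mod n^k))) {..<n*n^k}"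
    by (rule L2_set_triangle_ineq)
  also have "\<dots> = L2_set (\<lambda>l. us 0 l - vs 0 l) {..<n} * L2_set X {..<n^k} +
                  L2_set (vs 0) {..<n} * L2_set (\<lambda>l. X l - Y l) {..<n^k}"
    using L2_outer[OF pos, of "\<lambda>l. us 0 l - vs 0 l" X n] L2_outer[OF pos, of "vs 0" "\<lambda>l. X l - Y l" n]
    by simp
  also have "\<dots> \<le> L2_set (\<lambda>l. us 0 l - vs 0 l) {..<n} * 1 + 1 * L2_set (\<lambda>l. X l - Y l) {..<n^k}"
    using X1 v1 by (intro add_mono mult_mono) auto
  also have "\<dots> \<le> L2_set (\<lambda>l. us 0 l - vs 0 l) {..<n} + (\<Sum>i<k. L2_set (\<lambda>l. us (Suc i) l - vs (Suc i) l) {..<n})"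
    using Suc.IH[of "\<lambda>i. us (Suc i)" "\<lambda>i. vs (Suc i)"] Suc.prems unfolding X_def Y_def by auto
  also have "\<dots> = (\<Sum>i<Suc k. L2_set (\<lambda>l. us i l - vs i l) {..<n})"
    by (simp add: sum.lessThan_Suc_shift del: sum.lessThan_Suc)
  finally show ?case .
qed



lemma vnorm_L2: "vnorm N x = L2_set x {..<N}"
  by (simp add: vnorm_def L2_set_def)

lemma vdist_L2: "vdist N x y = L2_set (\<lambda>i. x i - y i) {..<N}"
  by (simp add: vdist_def L2_set_def)

lemma usphere_L2: "u \<in> usphere n \<Longrightarrow> L2_set u {..<n} = 1"
  by (simp add: usphere_def vnorm_L2)

lemma kron_cong: "(\<And>i. i < k \<Longrightarrow> us i = vs i) \<Longrightarrow> kron n k us = kron n k vs"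
  unfolding kron_def by (intro ext) (auto intro: prod.cong)

lemma kron_unit:
  assumes "n \<ge> 1" "\<forall>i<k. us i \<in> usphere n"
  shows "L2_set (kron n k us) {..<n^k} = 1"
  using assms by (simp add: kron_L2 usphere_L2)

lemma L2_sq: "L2_set x A = 1 \<Longrightarrow> (\<Sum>i\<in>A. (x i)^2) = 1"
  unfolding L2_set_def by simp

lemma sum_norm_sqrt2:
  assumes x: "L2_set x {..<N} = 1" and y: "L2_set y {..<N} = 1" and o: "vinner N x y = 0"
  shows "vnorm N (\<lambda>j. x j + y j) = sqrt 2"
proof -
  have "(\<Sum>j<N. (x j + y j)^2) = (\<Sum>j<N. (x j)^2) + (\<Sum>j<N. (y j)^2) + 2 * (\<Sum>j<N. x j * y j)"
    by (simp add: power2_sum sum.distrib sum_distrib_left mult.assoc)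
  also have "\<dots> = 2" using L2_sq[OF x] L2_sq[OF y] o by (simp add: vinner_def)
  finally show ?thesis by (simp add: vnorm_def)
qed

lemma cov_bound:
  assumes fin: "finite T" and sub: "T \<subseteq> S" and cov: "\<forall>x\<in>S. \<exists>y\<in>T. vdist N x y \<le> t"
    and card: "real (card T) \<le> K"
  shows "\<exists>k::nat. covering_number N S t = enat k \<and> real k \<le> K"
proof -
  have "covering_number N S t \<le> enat (card T)"
    unfolding covering_number_def using fin sub cov by (intro INF_lower2[of T]) auto
  then obtain k where k: "covering_number N S t = enat k" "k \<le> card T"
    by (cases "covering_number N S t") auto
  then show ?thesis using card by (intro exI[of _ k]) auto
qed

lemma L2_div_sqrt2: "L2_set (\<lambda>j. f j / sqrt 2) A = L2_set f A / sqrt 2"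
proof -
  have "L2_set (\<lambda>j. f j / sqrt 2) A = L2_set (\<lambda>j. inverse (sqrt 2) * f j) A"
    by (simp add: field_simps)
  also have "\<dots> = inverse (sqrt 2) * L2_set f A" by (simp add: L2_set_right_distrib)
  finally show ?thesis by (simp add: field_simps)
qed

lemma S2_E:
  assumes "z \<in> S2 n k"
  obtains us vs where "\<forall>i<k. us i \<in> usphere n" "\<forall>i<k. vs i \<in> usphere n"
    "vinner (n^k) (kron n k us) (kron n k vs) = 0"
    "z = (\<lambda>j. (kron n k us j + kron n k vs j) / vnorm (n^k) (\<lambda>j. kron n k us j + kron n k vs j))"
  using assms unfolding S2_def S1_def by blast

lemma S12_unit:
  assumes n1: "n \<ge> 1" and z: "z \<in> S12 n k"
  shows "L2_set z {..<n^k} = 1"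
proof (cases "z \<in> S1 n k")
  case True
  then show ?thesis unfolding S1_def using kron_unit[OF n1] by auto
next
  case False
  then have "z \<in> S2 n k" using z by (simp add: S12_def)
  then obtain us vs where us: "\<forall>i<k. us i \<in> usphere n" and vs: "\<forall>i<k. vs i \<in> usphere n"
    and o: "vinner (n^k) (kron n k us) (kron n k vs) = 0"
    and zd: "z = (\<lambda>j. (kron n k us j + kron n k vs j) / vnorm (n^k) (\<lambda>j. kron n k us j + kron n k vs j))"
    by (rule S2_E)
  have s2: "vnorm (n^k) (\<lambda>j. kron n k us j + kron n k vs j) = sqrt 2"
    by (rule sum_norm_sqrt2[OF kron_unit[OF n1 us] kron_unit[OF n1 vs] o])
  show ?thesis unfolding zd s2 L2_div_sqrt2 using s2 by (simp add: vnorm_L2)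
qed

definition sv :: "nat \<Rightarrow> nat \<Rightarrow> (nat \<Rightarrow> nat \<Rightarrow> real) \<Rightarrow> (nat \<Rightarrow> real)" where
  "sv n k w = (\<lambda>j. (kron n k w j + kron n k (\<lambda>i. w (i+k)) j) /
      vnorm (n^k) (\<lambda>j. kron n k w j + kron n k (\<lambda>i. w (i+k)) j))"

lemma sum_lt_bound: "(\<forall>i<k. a i < e) \<Longrightarrow> (\<Sum>i<k. a i) \<le> real k * e"
proof -
  assume "\<forall>i<k. a i < e"
  then have "(\<Sum>i<k. a i) \<le> (\<Sum>i<k. e)" by (intro sum_mono) (auto intro: less_imp_le)
  then show ?thesis by simp
qed

lemma sv_dist:
  assumes n1: "n \<ge> 1"
    and w: "\<forall>i<2*k. w i \<in> usphere n" and p: "\<forall>i<2*k. p i \<in> usphere n"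
    and ow: "vinner (n^k) (kron n k w) (kron n k (\<lambda>i. w (i+k))) = 0"
    and op: "vinner (n^k) (kron n k p) (kron n k (\<lambda>i. p (i+k))) = 0"
    and close: "\<forall>i<2*k. L2_set (\<lambda>l. w i l - p i l) {..<n} < e"
  shows "vdist (n^k) (sv n k w) (sv n k p) \<le> 2 * real k * e"
proof -
  define xw where "xw = kron n k w"
  define yw where "yw = kron n k (\<lambda>i. w (i+k))"
  define xp where "xp = kron n k p"
  define yp where "yp = kron n k (\<lambda>i. p (i+k))"
  have w1: "\<forall>i<k. w i \<in> usphere n" "\<forall>i<k. w (i+k) \<in> usphere n" using w by auto
  have p1: "\<forall>i<k. p i \<in> usphere n" "\<forall>i<k. p (i+k) \<in> usphere n" using p by auto
  have sw: "vnorm (n^k) (\<lambda>j. xw j + yw j) = sqrt 2"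
    unfolding xw_def yw_def using kron_unit[OF n1 w1(1)] kron_unit[OF n1 w1(2)] ow
    by (intro sum_norm_sqrt2) auto
  have sp: "vnorm (n^k) (\<lambda>j. xp j + yp j) = sqrt 2"
    unfolding xp_def yp_def using kron_unit[OF n1 p1(1)] kron_unit[OF n1 p1(2)] op
    by (intro sum_norm_sqrt2) auto
  have svw: "sv n k w = (\<lambda>j. (xw j + yw j) / sqrt 2)" using sw unfolding sv_def xw_def yw_def by simp
  have svp: "sv n k p = (\<lambda>j. (xp j + yp j) / sqrt 2)" using sp unfolding sv_def xp_def yp_def by simp
  have "vdist (n^k) (sv n k w) (sv n k p) = L2_set (\<lambda>j. ((xw j - xp j) + (yw j - yp j)) / sqrt 2) {..<n^k}"
    unfolding vdist_L2 svw svp by (intro L2_set_cong) (auto simp: field_simps)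
  also have "\<dots> = L2_set (\<lambda>j. (xw j - xp j) + (yw j - yp j)) {..<n^k} / sqrt 2"
    by (rule L2_div_sqrt2)
  also have "\<dots> \<le> L2_set (\<lambda>j. (xw j - xp j) + (yw j - yp j)) {..<n^k}"
  proof -
    have "1 \<le> sqrt (2::real)" by simp
    then show ?thesis by (simp add: divide_le_eq mult_le_cancel_left1 not_less)
  qed
  also have "\<dots> \<le> L2_set (\<lambda>j. xw j - xp j) {..<n^k} + L2_set (\<lambda>j. yw j - yp j) {..<n^k}"
    by (rule L2_set_triangle_ineq)
  also have "\<dots> \<le> (\<Sum>i<k. L2_set (\<lambda>l. w i l - p i l) {..<n}) + (\<Sum>i<k. L2_set (\<lambda>l. w (i+k) l - p (i+k) l) {..<n})"
    unfolding xw_def xp_def yw_def yp_def using w1 p1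
    by (intro add_mono kron_lip[OF n1]) (auto simp: usphere_L2)
  also have "\<dots> \<le> real k * e + real k * e"
    using close by (intro add_mono sum_lt_bound) auto
  finally show ?thesis by (simp add: algebra_simps)
qed

lemma unit_dist2:
  assumes "L2_set x {..<N} = 1" "L2_set y {..<N} = 1"
  shows "vdist N x y \<le> 2"
proof -
  have "vdist N x y = L2_set (\<lambda>i. x i + (- y i)) {..<N}" by (simp add: vdist_L2)
  also have "\<dots> \<le> L2_set x {..<N} + L2_set (\<lambda>i. - y i) {..<N}" by (rule L2_set_triangle_ineq)
  also have "L2_set (\<lambda>i. - y i) {..<N} = L2_set y {..<N}" by (simp add: L2_set_def)
  finally show ?thesis using assms by simp
qed

theorem lemma1:
  fixes n \<kappa> :: nat and t :: real
  assumes "n \<ge> 1" and "\<kappa> \<ge> 1" and "t > 0"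
  shows "\<exists>k::nat. covering_number (n ^ \<kappa>) (S12 n \<kappa>) t = enat k \<and>
           real k \<le> ((6 * real \<kappa> / t) ^ (\<kappa> * n) + 1) ^ 2"
proof -
  note n1 = assms(1) and k1 = assms(2) and t0 = assms(3)
  define M where "M = (6 * real \<kappa> / t) ^ (\<kappa> * n)"
  have M0: "M \<ge> 0" unfolding M_def using t0 by simp
  show ?thesis
  proof (cases "t \<le> 2 * real \<kappa>")
    case False
    define T where "T = (if S12 n \<kappa> = {} then {} else {SOME z. z \<in> S12 n \<kappa>})"
    have fin: "finite T" unfolding T_def by simp
    have sub: "T \<subseteq> S12 n \<kappa>" unfolding T_def by (auto simp: some_in_eq)
    have cardT: "card T \<le> 1" unfolding T_def by simp
    have cov: "\<forall>x\<in>S12 n \<kappa>. \<exists>y\<in>T. vdist (n^\<kappa>) x y \<le> t"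
    proof
      fix x assume x: "x \<in> S12 n \<kappa>"
      then have ne: "S12 n \<kappa> \<noteq> {}" by auto
      define y where "y = (SOME z. z \<in> S12 n \<kappa>)"
      have y: "y \<in> S12 n \<kappa>" unfolding y_def using x by (rule someI[of "\<lambda>z. z \<in> S12 n \<kappa>"])
      have "vdist (n^\<kappa>) x y \<le> 2" using S12_unit[OF n1 x] S12_unit[OF n1 y] by (rule unit_dist2)
      also have "\<dots> \<le> t" using False k1 by simp
      finally show "\<exists>y\<in>T. vdist (n^\<kappa>) x y \<le> t" using ne unfolding T_def y_def by auto
    qed
    have "real (card T) \<le> (M + 1)^2"
    proof -
      have "real (card T) \<le> 1" using cardT by simp
      also have "1 \<le> (M + 1)^2" using M0 by (simp add: one_le_power)
      finally show ?thesis .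
    qed
    then show ?thesis using cov_bound[OF fin sub cov] unfolding M_def by blast
  next
    case True
    define e where "e = t / (2 * real \<kappa>)"
    have e0: "e > 0" unfolding e_def using t0 k1 by simp
    have base: "1 + 2/e \<le> 6 * real \<kappa> / t"
    proof -
      have "2/e = 4 * real \<kappa> / t" unfolding e_def using k1 by (simp add: field_simps)
      moreover have "1 \<le> 2 * real \<kappa> / t" using True t0 by (simp add: field_simps)
      moreover have "6 * real \<kappa> / t = 2 * real \<kappa> / t + 4 * real \<kappa> / t"
        by (simp add: add_divide_distrib[symmetric])
      ultimately show ?thesis by linarith
    qed
    have b1: "(1 + 2/e)^(\<kappa>*n) \<le> M" unfolding M_def using base e0 by (intro power_mono) auto
    have b2: "(1 + 2/e)^((2*\<kappa>)*n) \<le> M^2"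
    proof -
      have "(1 + 2/e)^((2*\<kappa>)*n) = ((1 + 2/e)^(\<kappa>*n))^2"
        by (simp add: power_mult[symmetric] mult_ac)
      also have "\<dots> \<le> M^2" using b1 e0 by (intro power_mono) auto
      finally show ?thesis .
    qed
    define Z1 where "Z1 = {u :: nat \<Rightarrow> nat \<Rightarrow> real. \<forall>i<\<kappa>. u i \<in> usphere n}"
    define Z2 where "Z2 = {w :: nat \<Rightarrow> nat \<Rightarrow> real. (\<forall>i<2*\<kappa>. w i \<in> usphere n) \<and>
        vinner (n^\<kappa>) (kron n \<kappa> w) (kron n \<kappa> (\<lambda>i. w (i+\<kappa>))) = 0}"
    obtain P1 where P1: "finite P1" "P1 \<subseteq> Z1" "real (card P1) \<le> (1 + 2/e)^(\<kappa>*n)"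
      "\<forall>z\<in>Z1. \<exists>p\<in>P1. \<forall>i<\<kappa>. L2_set (\<lambda>j. z i j - p i j) {..<n} < e"
      using net_exists[OF n1 e0, of Z1 \<kappa>] unfolding Z1_def by (auto simp: usphere_L2)
    obtain P2 where P2: "finite P2" "P2 \<subseteq> Z2" "real (card P2) \<le> (1 + 2/e)^((2*\<kappa>)*n)"
      "\<forall>z\<in>Z2. \<exists>p\<in>P2. \<forall>i<2*\<kappa>. L2_set (\<lambda>j. z i j - p i j) {..<n} < e"
      using net_exists[OF n1 e0, of Z2 "2*\<kappa>"] unfolding Z2_def by (auto simp: usphere_L2)
    define T where "T = kron n \<kappa> ` P1 \<union> sv n \<kappa> ` P2"
    have fin: "finite T" unfolding T_def using P1 P2 by simp
    have sub: "T \<subseteq> S12 n \<kappa>"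
    proof
      fix z assume "z \<in> T"
      then consider (a) u where "u \<in> P1" "z = kron n \<kappa> u" | (b) w where "w \<in> P2" "z = sv n \<kappa> w"
        unfolding T_def by blast
      then show "z \<in> S12 n \<kappa>"
      proof cases
        case a
        then show ?thesis using P1(2) unfolding S12_def S1_def Z1_def by blast
      next
        case b
        then have w: "w \<in> Z2" using P2(2) by blast
        have "kron n \<kappa> w \<in> S1 n \<kappa>" "kron n \<kappa> (\<lambda>i. w (i+\<kappa>)) \<in> S1 n \<kappa>"
          using w unfolding Z2_def S1_def by auto
        then show ?thesis using w b unfolding S12_def S2_def sv_def Z2_def by blast
      qed
    qed
    have cardT: "real (card T) \<le> (M + 1)^2"
    proof -
      have "card T \<le> card (kron n \<kappa> ` P1) + card (sv n \<kappa> ` P2)" unfolding T_def by (rule card_Un_le)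
      also have "\<dots> \<le> card P1 + card P2" by (intro add_mono card_image_le P1 P2)
      finally have "real (card T) \<le> real (card P1) + real (card P2)" by linarith
      also have "\<dots> \<le> M + M^2" using P1(3) P2(3) b1 b2 by linarith
      also have "\<dots> \<le> (M + 1)^2" using M0 by (simp add: power2_eq_square algebra_simps)
      finally show ?thesis .
    qed
    have cov: "\<forall>x\<in>S12 n \<kappa>. \<exists>y\<in>T. vdist (n^\<kappa>) x y \<le> t"
    proof
      fix x assume x: "x \<in> S12 n \<kappa>"
      show "\<exists>y\<in>T. vdist (n^\<kappa>) x y \<le> t"
      proof (cases "x \<in> S1 n \<kappa>")
        case True
        then obtain us where us: "\<forall>i<\<kappa>. us i \<in> usphere n" and xd: "x = kron n \<kappa> us"
          unfolding S1_def by blast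
        have "us \<in> Z1" using us unfolding Z1_def by simp
        then obtain p where p: "p \<in> P1" and cl: "\<forall>i<\<kappa>. L2_set (\<lambda>j. us i j - p i j) {..<n} < e"
          using P1(4) by blast
        have pu: "\<forall>i<\<kappa>. p i \<in> usphere n" using p P1(2) unfolding Z1_def by blast
        have "vdist (n^\<kappa>) x (kron n \<kappa> p) \<le> (\<Sum>i<\<kappa>. L2_set (\<lambda>j. us i j - p i j) {..<n})"
          unfolding xd vdist_L2 using us pu by (intro kron_lip[OF n1]) (auto simp: usphere_L2)
        also have "\<dots> \<le> real \<kappa> * e" using cl by (rule sum_lt_bound)
        also have "\<dots> \<le> t" unfolding e_def using k1 t0 by simp
        finally show ?thesis using p unfolding T_def by blast
      next
        case False
        then have "x \<in> S2 n \<kappa>" using x by (simp add: S12_def)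
        then obtain us vs where us: "\<forall>i<\<kappa>. us i \<in> usphere n" and vs: "\<forall>i<\<kappa>. vs i \<in> usphere n"
          and o: "vinner (n^\<kappa>) (kron n \<kappa> us) (kron n \<kappa> vs) = 0"
          and xd: "x = (\<lambda>j. (kron n \<kappa> us j + kron n \<kappa> vs j) / vnorm (n^\<kappa>) (\<lambda>j. kron n \<kappa> us j + kron n \<kappa> vs j))"
          by (rule S2_E)
        define w where "w i = (if i < \<kappa> then us i else vs (i - \<kappa>))" for i
        have kw1: "kron n \<kappa> w = kron n \<kappa> us" by (rule kron_cong) (simp add: w_def)
        have kw2: "kron n \<kappa> (\<lambda>i. w (i+\<kappa>)) = kron n \<kappa> vs" by (rule kron_cong) (simp add: w_def)
        have wu: "\<forall>i<2*\<kappa>. w i \<in> usphere n" using us vs unfolding w_def by auto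
        have wZ: "w \<in> Z2" unfolding Z2_def using wu o kw1 kw2 by simp
        have xw: "x = sv n \<kappa> w" unfolding xd sv_def kw1 kw2 ..
        obtain p where p: "p \<in> P2" and cl: "\<forall>i<2*\<kappa>. L2_set (\<lambda>j. w i j - p i j) {..<n} < e"
          using P2(4) wZ by blast
        have pZ: "p \<in> Z2" using p P2(2) by blast
        have "vdist (n^\<kappa>) x (sv n \<kappa> p) \<le> 2 * real \<kappa> * e"
          unfolding xw using wZ pZ cl unfolding Z2_def by (intro sv_dist[OF n1]) auto
        also have "\<dots> = t" unfolding e_def using k1 by simp
        finally show ?thesis using p unfolding T_def by blast
      qed
    qed
    show ?thesis using cov_bound[OF fin sub cov cardT] unfolding M_def by blast
  qed
qed


end
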